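(* In the setting below, the cokernel $A/\rho(G)$ of $\rho\colon G\to A$ is abelian.
   Context: Let $G$ be a group generated by $a_1,\dots,a_n$ with $z=a_1\cdots a_n$ central. Let $S_1,\dots,S_m\subseteq\{1,\dots,n\}$ with $|S_i\cap S_r|\le1$ for $i\neq r$. For $S\subseteq\{1,\dots,n\}$ let $G_S$ be the quotient of $G$ by the normal closure of $\{a_j:j\notin S\}$; let $a_{ij}$ be the image of $a_j$ in $G_{S_i}$ and $z_i=a_{i1}\cdots a_{in}$ (central in $G_{S_i}$). Assume each $G_{S_i}/\langle z_i\rangle$ is free of rank $|S_i|-1$, the images of any $|S_i|-1$ of the $a_{ij}$, $j\in S_i$, forming a free basis. Let $A=\prod_{i=1}^mG_{S_i}$ and $\rho\colon G\to A$ the product of the projections; $\rho(G)$ is normal in $A$. *)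

theory Defs
  imports "HOL-Algebra.Algebra"
begin

definition gprod :: "('a, 'b) monoid_scheme \<Rightarrow> 'a list \<Rightarrow> 'a" where
  "gprod G xs = foldr (\<lambda>x y. x \<otimes>\<^bsub>G\<^esub> y) xs \<one>\<^bsub>G\<^esub>"

definition normal_closure :: "('a, 'b) monoid_scheme \<Rightarrow> 'a set \<Rightarrow> 'a set" where
  "normal_closure G T =
     generate G (\<Union>g\<in>carrier G. (\<lambda>x. monoid.mult G (monoid.mult G g x) (m_inv G g)) ` T)"

definition kill_kernel :: "('a, 'b) monoid_scheme \<Rightarrow> (nat \<Rightarrow> 'a) \<Rightarrow> nat \<Rightarrow> nat set \<Rightarrow> 'a set" where
  "kill_kernel G a n S = normal_closure G (a ` ({1..n} - S))"

definition quot_S :: "('a, 'b) monoid_scheme \<Rightarrow> (nat \<Rightarrow> 'a) \<Rightarrow> nat \<Rightarrow> nat set \<Rightarrow> 'a set monoid" where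
  "quot_S G a n S = G Mod (kill_kernel G a n S)"

definition proj_S :: "('a, 'b) monoid_scheme \<Rightarrow> (nat \<Rightarrow> 'a) \<Rightarrow> nat \<Rightarrow> nat set \<Rightarrow> 'a \<Rightarrow> 'a set" where
  "proj_S G a n S g = kill_kernel G a n S #>\<^bsub>G\<^esub> g"

text \<open>Words in the letters x_j^{+1} (True) and x_j^{-1} (False), j in I.\<close>
definition word_eval :: "('a, 'b) monoid_scheme \<Rightarrow> ('i \<Rightarrow> 'a) \<Rightarrow> ('i \<times> bool) list \<Rightarrow> 'a" where
  "word_eval H f w = gprod H (map (\<lambda>(j, e). if e then f j else m_inv H (f j)) w)"

definition reduced_word :: "('i \<times> bool) list \<Rightarrow> bool" where
  "reduced_word w \<longleftrightarrow>
     (\<forall>k. Suc k < length w \<longrightarrow> \<not> (fst (w ! k) = fst (w ! Suc k) \<and> snd (w ! k) \<noteq> snd (w ! Suc k)))"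

text \<open>The family (f j)_{j in I} is a free basis of the group H: it generates H and
  no nonempty reduced word in it evaluates to the identity (so in particular f is
  injective on I and H is free of rank card I).\<close>
definition free_basis :: "('a, 'b) monoid_scheme \<Rightarrow> ('i \<Rightarrow> 'a) \<Rightarrow> 'i set \<Rightarrow> bool" where
  "free_basis H f I \<longleftrightarrow>
     f ` I \<subseteq> carrier H \<and>
     generate H (f ` I) = carrier H \<and>
     (\<forall>w. w \<noteq> [] \<longrightarrow> set (map fst w) \<subseteq> I \<longrightarrow> reduced_word w \<longrightarrow> word_eval H f w \<noteq> \<one>\<^bsub>H\<^esub>)"

end

theory Submission imports Defs begin

lemma (in group) inv_canc1: "x \<in> carrier G \<Longrightarrow> y \<in> carrier G \<Longrightarrow> inv x \<otimes> (x \<otimes> y) = y"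
  by (simp add: m_assoc[symmetric])
lemma (in group) inv_canc2: "x \<in> carrier G \<Longrightarrow> y \<in> carrier G \<Longrightarrow> x \<otimes> (inv x \<otimes> y) = y"
  by (simp add: m_assoc[symmetric])

lemma (in group) comm_centr_subgroup:
  assumes N: "N \<lhd> G" and x: "x \<in> carrier G"
  shows "subgroup {u \<in> carrier G. u \<otimes> x \<otimes> inv u \<otimes> inv x \<in> N} G"
proof -
  interpret N: normal N G by (rule N)
  show ?thesis
  proof (rule subgroupI)
    show "{u \<in> carrier G. u \<otimes> x \<otimes> inv u \<otimes> inv x \<in> N} \<subseteq> carrier G" by auto
    show "{u \<in> carrier G. u \<otimes> x \<otimes> inv u \<otimes> inv x \<in> N} \<noteq> {}"
    proof -
      have "\<one> \<in> {u \<in> carrier G. u \<otimes> x \<otimes> inv u \<otimes> inv x \<in> N}"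
        using x N.one_closed by (simp add: m_assoc)
      thus ?thesis by blast
    qed
  next
    fix u assume u: "u \<in> {u \<in> carrier G. u \<otimes> x \<otimes> inv u \<otimes> inv x \<in> N}"
    hence uc: "u \<in> carrier G" and c: "u \<otimes> x \<otimes> inv u \<otimes> inv x \<in> N" by auto
    have "inv u \<otimes> inv (u \<otimes> x \<otimes> inv u \<otimes> inv x) \<otimes> inv (inv u) \<in> N"
      using N.inv_op_closed2[OF inv_closed[OF uc] N.m_inv_closed[OF c]] .
    moreover have "inv u \<otimes> inv (u \<otimes> x \<otimes> inv u \<otimes> inv x) \<otimes> inv (inv u) = inv u \<otimes> x \<otimes> inv (inv u) \<otimes> inv x"
      using uc x by (simp add: inv_mult_group m_assoc inv_canc1 inv_canc2)
    ultimately show "inv u \<in> {u \<in> carrier G. u \<otimes> x \<otimes> inv u \<otimes> inv x \<in> N}" using uc by auto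
  next
    fix u w assume u: "u \<in> {u \<in> carrier G. u \<otimes> x \<otimes> inv u \<otimes> inv x \<in> N}"
      and w: "w \<in> {u \<in> carrier G. u \<otimes> x \<otimes> inv u \<otimes> inv x \<in> N}"
    hence uc: "u \<in> carrier G" and cu: "u \<otimes> x \<otimes> inv u \<otimes> inv x \<in> N"
      and wc: "w \<in> carrier G" and cw: "w \<otimes> x \<otimes> inv w \<otimes> inv x \<in> N" by auto
    have "u \<otimes> (w \<otimes> x \<otimes> inv w \<otimes> inv x) \<otimes> inv u \<in> N"
      using N.inv_op_closed2[OF uc cw] .
    hence "u \<otimes> (w \<otimes> x \<otimes> inv w \<otimes> inv x) \<otimes> inv u \<otimes> (u \<otimes> x \<otimes> inv u \<otimes> inv x) \<in> N"
      using cu by auto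
    moreover have "u \<otimes> (w \<otimes> x \<otimes> inv w \<otimes> inv x) \<otimes> inv u \<otimes> (u \<otimes> x \<otimes> inv u \<otimes> inv x)
       = u \<otimes> w \<otimes> x \<otimes> inv (u \<otimes> w) \<otimes> inv x"
      using uc wc x by (simp add: inv_mult_group m_assoc inv_canc1 inv_canc2)
    ultimately show "u \<otimes> w \<in> {u \<in> carrier G. u \<otimes> x \<otimes> inv u \<otimes> inv x \<in> N}" using uc wc by auto
  qed
qed

lemma (in group) comm_swap:
  assumes N: "subgroup N G" and u: "u \<in> carrier G" and vv: "vv \<in> carrier G"
    and c: "u \<otimes> vv \<otimes> inv u \<otimes> inv vv \<in> N"
  shows "vv \<otimes> u \<otimes> inv vv \<otimes> inv u \<in> N"
proof -
  have "inv (u \<otimes> vv \<otimes> inv u \<otimes> inv vv) \<in> N" using subgroup.m_inv_closed[OF N c] .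
  moreover have "inv (u \<otimes> vv \<otimes> inv u \<otimes> inv vv) = vv \<otimes> u \<otimes> inv vv \<otimes> inv u"
    using u vv by (simp add: inv_mult_group m_assoc inv_canc1 inv_canc2)
  ultimately show ?thesis by simp
qed

lemma (in group) gen_comm:
  assumes N: "N \<lhd> G" and Gs: "Gs \<subseteq> carrier G" and gen: "generate G Gs = carrier G"
    and c: "\<And>x y. x \<in> Gs \<Longrightarrow> y \<in> Gs \<Longrightarrow> x \<otimes> y \<otimes> inv x \<otimes> inv y \<in> N"
    and u: "u \<in> carrier G" and vv: "vv \<in> carrier G"
  shows "u \<otimes> vv \<otimes> inv u \<otimes> inv vv \<in> N"
proof -
  have sN: "subgroup N G" using N normal_def by blast
  have s1: "\<forall>w\<in>carrier G. w \<otimes> x \<otimes> inv w \<otimes> inv x \<in> N" if x: "x \<in> Gs" for x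
  proof -
    have "generate G Gs \<subseteq> {u \<in> carrier G. u \<otimes> x \<otimes> inv u \<otimes> inv x \<in> N}"
      by (rule generate_subgroup_incl[OF _ comm_centr_subgroup[OF N]]) (use Gs x c in auto)
    thus ?thesis using gen by auto
  qed
  have "generate G Gs \<subseteq> {u \<in> carrier G. u \<otimes> vv \<otimes> inv u \<otimes> inv vv \<in> N}"
    by (rule generate_subgroup_incl[OF _ comm_centr_subgroup[OF N vv]])
       (use Gs vv s1 comm_swap[OF sN] in blast)
  thus ?thesis using gen u by auto
qed

lemma (in group) comm_quot:
  assumes H: "subgroup H G"
    and c: "\<And>x y. x \<in> carrier G \<Longrightarrow> y \<in> carrier G \<Longrightarrow> x \<otimes> y \<otimes> inv x \<otimes> inv y \<in> H"
  shows "comm_group (G Mod H)"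
proof -
  have N: "H \<lhd> G"
  proof (rule normal_invI[OF H])
    fix x h assume x: "x \<in> carrier G" and h: "h \<in> H"
    have hc: "h \<in> carrier G" using H h subgroup.subset by blast
    have "x \<otimes> h \<otimes> inv x \<otimes> inv h \<otimes> h \<in> H" using c[OF x hc] h subgroup.m_closed[OF H] by blast
    thus "x \<otimes> h \<otimes> inv x \<in> H" using x hc by (simp add: m_assoc)
  qed
  interpret N: normal H G by (rule N)
  show ?thesis
  proof (rule group.group_comm_groupI[OF N.factorgroup_is_group], simp add: FactGroup_def)
    fix A B assume "A \<in> rcosets H" and "B \<in> rcosets H"
    then obtain g1 g2
      where g1: "g1 \<in> carrier G" "A = H #> g1"
        and g2: "g2 \<in> carrier G" "B = H #> g2"
      unfolding RCOSETS_def by auto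
    have key: "H #> (g1 \<otimes> g2) \<subseteq> H #> (g2 \<otimes> g1)"
      if g1: "g1 \<in> carrier G" and g2: "g2 \<in> carrier G" for g1 g2
    proof
      fix h assume "h \<in> H #> (g1 \<otimes> g2)"
      then obtain g' where h: "g' \<in> carrier G" "g' \<in> H" "h = g' \<otimes> (g1 \<otimes> g2)"
        using N.subset unfolding r_coset_def by auto
      hence "h = g' \<otimes> (g1 \<otimes> g2) \<otimes> (inv g1 \<otimes> inv g2 \<otimes> g2 \<otimes> g1)"
        using g1 g2 by (simp add: m_assoc)
      hence "h = (g' \<otimes> (g1 \<otimes> g2 \<otimes> inv g1 \<otimes> inv g2)) \<otimes> (g2 \<otimes> g1)"
        using h(1) g1 g2 inv_closed m_assoc m_closed by presburger
      moreover have "g' \<otimes> (g1 \<otimes> g2 \<otimes> inv g1 \<otimes> inv g2) \<in> H"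
        using N.m_closed[OF h(2) c[OF g1 g2]] .
      ultimately show "h \<in> H #> (g2 \<otimes> g1)"
        unfolding r_coset_def by blast
    qed
    have "A <#> B = H #> (g1 \<otimes> g2)" by (simp add: g1 g2 N.rcos_sum)
    also have "\<dots> = H #> (g2 \<otimes> g1)" using key g1(1) g2(1) by blast
    also have "\<dots> = B <#> A" by (simp add: g1 g2 N.rcos_sum)
    finally show "A <#> B = B <#> A" .
  qed
qed


lemma (in group) comm_one:
  assumes "x \<in> carrier G" "y \<in> carrier G" "x = \<one> \<or> y = \<one> \<or> x = y"
  shows "x \<otimes> y \<otimes> inv x \<otimes> inv y = \<one>"
  using assms by (auto simp: m_assoc inv_canc2)
theorem mainTheorem13:
  fixes G :: "('a, 'b) monoid_scheme"
    and a :: "nat \<Rightarrow> 'a"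
    and n m :: nat
    and S :: "nat \<Rightarrow> nat set"
  assumes grp: "group G"
    and a_in: "a ` {1..n} \<subseteq> carrier G"
    and gen: "generate G (a ` {1..n}) = carrier G"
    and z_central: "\<forall>g\<in>carrier G.
                      g \<otimes>\<^bsub>G\<^esub> gprod G (map a [1..<Suc n]) = gprod G (map a [1..<Suc n]) \<otimes>\<^bsub>G\<^esub> g"
    and S_sub: "\<forall>i\<in>{1..m}. S i \<subseteq> {1..n}"
    and S_ne: "\<forall>i\<in>{1..m}. S i \<noteq> {}"
    and S_inter: "\<forall>i\<in>{1..m}. \<forall>r\<in>{1..m}. i \<noteq> r \<longrightarrow> card (S i \<inter> S r) \<le> 1"
    and free: "\<forall>i\<in>{1..m}. \<forall>j0\<in>S i.
       free_basis
         (quot_S G a n (S i) Mod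
            generate (quot_S G a n (S i)) {gprod (quot_S G a n (S i)) (map (\<lambda>j. proj_S G a n (S i) (a j)) [1..<Suc n])})
         (\<lambda>j. generate (quot_S G a n (S i)) {gprod (quot_S G a n (S i)) (map (\<lambda>j. proj_S G a n (S i) (a j)) [1..<Suc n])}
                #>\<^bsub>quot_S G a n (S i)\<^esub> proj_S G a n (S i) (a j))
         (S i - {j0})"
  shows "comm_group
           (product_group {1..m} (\<lambda>i. quot_S G a n (S i))
              Mod ((\<lambda>g. \<lambda>i\<in>{1..m}. proj_S G a n (S i) g) ` carrier G))"
proof -
  interpret G: group G by (rule grp)
  define I where "I = {1..m}"
  define Q where "Q = (\<lambda>i. quot_S G a n (S i))"
  define NN where "NN = (\<lambda>i. kill_kernel G a n (S i))"
  define pr where "pr = (\<lambda>i. proj_S G a n (S i))"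
  define P where "P = product_group I Q"
  define \<rho> where "\<rho> = (\<lambda>g. \<lambda>i\<in>I. pr i g)"
  define H where "H = \<rho> ` carrier G"
  have Q_eq: "Q i = G Mod NN i" for i unfolding Q_def NN_def quot_S_def by simp
  have pr_eq: "pr i g = NN i #>\<^bsub>G\<^esub> g" for i g unfolding pr_def NN_def proj_S_def by simp
  have normal: "NN i \<lhd> G" for i
  proof -
    let ?T = "a ` ({1..n} - S i)"
    let ?C = "\<Union>g\<in>carrier G. (\<lambda>x. g \<otimes>\<^bsub>G\<^esub> x \<otimes>\<^bsub>G\<^esub> inv\<^bsub>G\<^esub> g) ` ?T"
    have T: "?T \<subseteq> carrier G" using a_in by auto
    have "generate G ?C \<lhd> G"
    proof (rule G.normal_generateI)
      show "?C \<subseteq> carrier G" using T by auto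
    next
      fix h g assume h: "h \<in> ?C" and g: "g \<in> carrier G"
      then obtain g' x where g': "g' \<in> carrier G" and x: "x \<in> ?T" and hx: "h = g' \<otimes>\<^bsub>G\<^esub> x \<otimes>\<^bsub>G\<^esub> inv\<^bsub>G\<^esub> g'"
        by blast
      have xc: "x \<in> carrier G" using x T by auto
      have "g \<otimes>\<^bsub>G\<^esub> h \<otimes>\<^bsub>G\<^esub> inv\<^bsub>G\<^esub> g = (g \<otimes>\<^bsub>G\<^esub> g') \<otimes>\<^bsub>G\<^esub> x \<otimes>\<^bsub>G\<^esub> inv\<^bsub>G\<^esub> (g \<otimes>\<^bsub>G\<^esub> g')"
        using g g' xc by (simp add: hx G.m_assoc G.inv_mult_group)
      thus "g \<otimes>\<^bsub>G\<^esub> h \<otimes>\<^bsub>G\<^esub> inv\<^bsub>G\<^esub> g \<in> ?C" using g g' x by blast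
    qed
    thus ?thesis unfolding NN_def kill_kernel_def normal_closure_def by simp
  qed
  have grpQ: "group (Q i)" for i unfolding Q_eq using normal.factorgroup_is_group[OF normal] .
  have homQ: "pr i \<in> hom G (Q i)" for i
    unfolding Q_eq pr_eq using normal.r_coset_hom_Mod[OF normal[of i]] by simp
  have ghQ: "group_hom G (Q i) (pr i)" for i
    using homQ grpQ grp by (simp add: group_hom_def group_hom_axioms_def)
  have carrQ: "carrier (Q i) = pr i ` carrier G" for i
    unfolding Q_eq pr_eq by (simp add: carrier_FactGroup)
  have triv: "pr i (a j) = \<one>\<^bsub>Q i\<^esub>" if j: "j \<in> {1..n}" "j \<notin> S i" for i j
  proof -
    have "\<one>\<^bsub>G\<^esub> \<otimes>\<^bsub>G\<^esub> a j \<otimes>\<^bsub>G\<^esub> inv\<^bsub>G\<^esub> \<one>\<^bsub>G\<^esub> = a j"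
      using j a_in by (subgoal_tac "a j \<in> carrier G") auto
    hence "a j \<in> (\<Union>g\<in>carrier G. (\<lambda>x. g \<otimes>\<^bsub>G\<^esub> x \<otimes>\<^bsub>G\<^esub> inv\<^bsub>G\<^esub> g) ` a ` ({1..n} - S i))"
      using j by (metis (no_types, lifting) DiffI G.one_closed UN_iff image_eqI)
    hence aN: "a j \<in> NN i" unfolding NN_def kill_kernel_def normal_closure_def
      by (simp add: generate.incl)
    have "NN i #>\<^bsub>G\<^esub> a j = NN i"
      using subgroup.rcos_const[OF normal_imp_subgroup[OF normal] grp aN] .
    thus ?thesis unfolding pr_eq Q_eq by simp
  qed
  have genQ: "generate (Q i) (pr i ` a ` {1..n}) = carrier (Q i)" for i
    using group_hom.generate_img[OF ghQ a_in] gen carrQ by simp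
  have grpP: "group P" unfolding P_def using grpQ by simp
  have rhoP: "\<rho> g \<in> carrier P" if "g \<in> carrier G" for g
    unfolding P_def \<rho>_def using that homQ by (auto simp: hom_def)
  have hom_rho: "\<rho> \<in> hom G P"
  proof (rule homI)
    show "\<rho> x \<in> carrier P" if "x \<in> carrier G" for x using rhoP that .
    show "\<rho> (x \<otimes>\<^bsub>G\<^esub> y) = \<rho> x \<otimes>\<^bsub>P\<^esub> \<rho> y" if "x \<in> carrier G" "y \<in> carrier G" for x y
      unfolding P_def \<rho>_def using that by (simp only: mult_product_group) (intro restrict_ext, simp add: hom_mult[OF homQ])
  qed
  have Hsub: "subgroup H P"
    unfolding H_def using group_hom.img_is_subgroup[of G P \<rho>] hom_rho grpP grp
    by (simp add: group_hom_def group_hom_axioms_def)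

  have oneQ: "\<one>\<^bsub>Q k\<^esub> \<in> carrier (Q k)" for k using group.is_monoid[OF grpQ] monoid.one_closed by blast
  have prC: "pr k g \<in> carrier (Q k)" if "g \<in> carrier G" for k g using homQ that by (auto simp: hom_def)
  define e where "e = (\<lambda>i q. \<lambda>k\<in>I. if k = i then q else \<one>\<^bsub>Q k\<^esub>)"
  have eP: "e i q \<in> carrier P" if "q \<in> carrier (Q i)" for i q
    unfolding P_def e_def using that oneQ by auto
  have emul: "e i (q \<otimes>\<^bsub>Q i\<^esub> r) = e i q \<otimes>\<^bsub>P\<^esub> e i r"
    if "q \<in> carrier (Q i)" "r \<in> carrier (Q i)" for i q r
    unfolding P_def e_def using that oneQ
    by (simp only: mult_product_group) (intro restrict_ext, simp add: group.is_monoid[OF grpQ])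
  have einv: "inv\<^bsub>P\<^esub> (e i q) = e i (inv\<^bsub>Q i\<^esub> q)" if "q \<in> carrier (Q i)" for i q
  proof -
    have "e i q \<in> (\<Pi>\<^sub>E k\<in>I. carrier (Q k))" using eP[OF that] unfolding P_def by simp
    hence "inv\<^bsub>P\<^esub> (e i q) = (\<lambda>k\<in>I. inv\<^bsub>Q k\<^esub> (e i q k))"
      unfolding P_def using inv_product_group grpQ by blast
    also have "\<dots> = e i (inv\<^bsub>Q i\<^esub> q)" unfolding e_def
      by (intro restrict_ext) (simp add: monoid.inv_one[OF group.is_monoid[OF grpQ]])
    finally show ?thesis .
  qed
  have eone: "e i \<one>\<^bsub>Q i\<^esub> = \<one>\<^bsub>P\<^esub>" for i
    unfolding P_def e_def one_product_group by (intro restrict_ext) simp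
  have rinv: "inv\<^bsub>P\<^esub> (\<rho> g) = (\<lambda>k\<in>I. inv\<^bsub>Q k\<^esub> (pr k g))" if "g \<in> carrier G" for g
  proof -
    have "\<rho> g \<in> (\<Pi>\<^sub>E k\<in>I. carrier (Q k))" using rhoP[OF that] unfolding P_def by simp
    hence "inv\<^bsub>P\<^esub> (\<rho> g) = (\<lambda>k\<in>I. inv\<^bsub>Q k\<^esub> (\<rho> g k))"
      unfolding P_def using inv_product_group grpQ by blast
    thus ?thesis unfolding \<rho>_def by (auto intro!: restrict_ext)
  qed
  have econj: "\<rho> g \<otimes>\<^bsub>P\<^esub> e i q \<otimes>\<^bsub>P\<^esub> inv\<^bsub>P\<^esub> (\<rho> g) = e i (pr i g \<otimes>\<^bsub>Q i\<^esub> q \<otimes>\<^bsub>Q i\<^esub> inv\<^bsub>Q i\<^esub> (pr i g))"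
    if g: "g \<in> carrier G" and q: "q \<in> carrier (Q i)" for g i q
    unfolding rinv[OF g] unfolding P_def e_def \<rho>_def
    by (simp only: mult_product_group)
       (intro restrict_ext, simp add: group.is_monoid[OF grpQ] group.r_inv[OF grpQ] prC[OF g])
  have Hone: "\<one>\<^bsub>P\<^esub> \<in> H" using subgroup.one_closed[OF Hsub] .
  have rhoH: "\<rho> g \<in> H" if "g \<in> carrier G" for g unfolding H_def using that by blast
  define D where "D = (\<lambda>i. {q \<in> carrier (Q i). e i q \<in> H})"
  have Dnormal: "D i \<lhd> Q i" for i
  proof (rule group.normal_invI[OF grpQ])
    show "subgroup (D i) (Q i)"
    proof (rule group.subgroupI[OF grpQ])
      show "D i \<subseteq> carrier (Q i)" unfolding D_def by auto
      show "D i \<noteq> {}" using oneQ eone Hone unfolding D_def by force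
      show "inv\<^bsub>Q i\<^esub> q \<in> D i" if "q \<in> D i" for q
        using that subgroup.m_inv_closed[OF Hsub] einv group.inv_closed[OF grpQ]
        unfolding D_def by fastforce
      show "q \<otimes>\<^bsub>Q i\<^esub> r \<in> D i" if "q \<in> D i" "r \<in> D i" for q r
        using that subgroup.m_closed[OF Hsub] emul group.is_monoid[OF grpQ] monoid.m_closed
        unfolding D_def by fastforce
    qed
  next
    fix x h assume x: "x \<in> carrier (Q i)" and h: "h \<in> D i"
    then obtain g where g: "g \<in> carrier G" "x = pr i g" using carrQ by blast
    have hc: "h \<in> carrier (Q i)" and hH: "e i h \<in> H" using h unfolding D_def by auto
    have "\<rho> g \<otimes>\<^bsub>P\<^esub> e i h \<otimes>\<^bsub>P\<^esub> inv\<^bsub>P\<^esub> (\<rho> g) \<in> H"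
      using subgroup.m_closed[OF Hsub] subgroup.m_inv_closed[OF Hsub] rhoH[OF g(1)] hH by blast
    hence "e i (x \<otimes>\<^bsub>Q i\<^esub> h \<otimes>\<^bsub>Q i\<^esub> inv\<^bsub>Q i\<^esub> x) \<in> H" using econj[OF g(1) hc] g by simp
    moreover have "x \<otimes>\<^bsub>Q i\<^esub> h \<otimes>\<^bsub>Q i\<^esub> inv\<^bsub>Q i\<^esub> x \<in> carrier (Q i)"
      using x hc by (simp add: group.is_monoid[OF grpQ] group.inv_closed[OF grpQ] monoid.m_closed)
    ultimately show "x \<otimes>\<^bsub>Q i\<^esub> h \<otimes>\<^bsub>Q i\<^esub> inv\<^bsub>Q i\<^esub> x \<in> D i" unfolding D_def by simp
  qed

  have gencomm: "x \<otimes>\<^bsub>Q i\<^esub> y \<otimes>\<^bsub>Q i\<^esub> inv\<^bsub>Q i\<^esub> x \<otimes>\<^bsub>Q i\<^esub> inv\<^bsub>Q i\<^esub> y \<in> D i"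
    if i: "i \<in> I" and x: "x \<in> pr i ` a ` {1..n}" and y: "y \<in> pr i ` a ` {1..n}" for i x y
  proof -
    interpret Qi: group "Q i" by (rule grpQ)
    obtain j k where j: "j \<in> {1..n}" "x = pr i (a j)" and k: "k \<in> {1..n}" "y = pr i (a k)"
      using x y by blast
    have ajc: "a j \<in> carrier G" and akc: "a k \<in> carrier G" using j k a_in by auto
    have xc: "x \<in> carrier (Q i)" and yc: "y \<in> carrier (Q i)" using j k prC ajc akc by auto
    have oneD: "\<one>\<^bsub>Q i\<^esub> \<in> D i" unfolding D_def using eone Hone by simp
    show ?thesis
    proof (cases "j \<in> S i \<and> k \<in> S i \<and> j \<noteq> k")
      case False
      then consider "j \<notin> S i" | "k \<notin> S i" | "j = k" by blast
      then show ?thesis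
      proof cases
        case 1
        hence "x = \<one>\<^bsub>Q i\<^esub>" using triv[OF j(1) 1] j(2) by simp
        hence "x \<otimes>\<^bsub>Q i\<^esub> y \<otimes>\<^bsub>Q i\<^esub> inv\<^bsub>Q i\<^esub> x \<otimes>\<^bsub>Q i\<^esub> inv\<^bsub>Q i\<^esub> y = \<one>\<^bsub>Q i\<^esub>"
          using Qi.comm_one[OF xc yc] by blast
        thus ?thesis using oneD by (simp only:)
      next
        case 2
        hence "y = \<one>\<^bsub>Q i\<^esub>" using triv[OF k(1) 2] k(2) by simp
        hence "x \<otimes>\<^bsub>Q i\<^esub> y \<otimes>\<^bsub>Q i\<^esub> inv\<^bsub>Q i\<^esub> x \<otimes>\<^bsub>Q i\<^esub> inv\<^bsub>Q i\<^esub> y = \<one>\<^bsub>Q i\<^esub>"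
          using Qi.comm_one[OF xc yc] by blast
        thus ?thesis using oneD by (simp only:)
      next
        case 3
        hence "x = y" using j(2) k(2) by simp
        hence "x \<otimes>\<^bsub>Q i\<^esub> y \<otimes>\<^bsub>Q i\<^esub> inv\<^bsub>Q i\<^esub> x \<otimes>\<^bsub>Q i\<^esub> inv\<^bsub>Q i\<^esub> y = \<one>\<^bsub>Q i\<^esub>"
          using Qi.comm_one[OF xc yc] by blast
        thus ?thesis using oneD by (simp only:)
      qed
    next
      case True
      define c where "c = a j \<otimes>\<^bsub>G\<^esub> a k \<otimes>\<^bsub>G\<^esub> inv\<^bsub>G\<^esub> a j \<otimes>\<^bsub>G\<^esub> inv\<^bsub>G\<^esub> a k"
      have cc: "c \<in> carrier G" unfolding c_def using ajc akc by simp
      have prc: "pr r c = pr r (a j) \<otimes>\<^bsub>Q r\<^esub> pr r (a k) \<otimes>\<^bsub>Q r\<^esub> inv\<^bsub>Q r\<^esub> pr r (a j) \<otimes>\<^bsub>Q r\<^esub> inv\<^bsub>Q r\<^esub> pr r (a k)" for r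
        unfolding c_def using ajc akc
        by (simp add: hom_mult[OF homQ] group_hom.hom_inv[OF ghQ])
      have "\<rho> c = e i (pr i c)"
        unfolding \<rho>_def e_def
      proof (intro restrict_ext)
        fix r assume r: "r \<in> I"
        show "pr r c = (if r = i then pr i c else \<one>\<^bsub>Q r\<^esub>)"
        proof (cases "r = i")
          case False
          have "\<not> (j \<in> S r \<and> k \<in> S r)"
          proof
            assume jk: "j \<in> S r \<and> k \<in> S r"
            have fin: "finite (S i \<inter> S r)" using S_sub i unfolding I_def
              by (meson finite_Int finite_atLeastAtMost finite_subset)
            have "{j, k} \<subseteq> S i \<inter> S r" using jk True by auto
            hence "card {j, k} \<le> card (S i \<inter> S r)" by (rule card_mono[OF fin])
            moreover have "card (S i \<inter> S r) \<le> 1" using S_inter i r False by (simp add: I_def)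
            moreover have "card {j, k} = 2" using True by simp
            ultimately show False by linarith
          qed
          hence "pr r (a j) = \<one>\<^bsub>Q r\<^esub> \<or> pr r (a k) = \<one>\<^bsub>Q r\<^esub>" using triv[OF j(1), of r] triv[OF k(1), of r] by blast
          hence "pr r c = \<one>\<^bsub>Q r\<^esub>"
            unfolding prc[of r] by (intro group.comm_one[OF grpQ prC[OF ajc] prC[OF akc]]) blast
          thus ?thesis using False by simp
        qed simp
      qed
      hence "e i (pr i c) \<in> H" using rhoH[OF cc] by simp
      moreover have "pr i c \<in> carrier (Q i)" using prC[OF cc] .
      ultimately show ?thesis using prc[of i] j k unfolding D_def by simp
    qed
  qed
  have allcomm: "x \<otimes>\<^bsub>Q i\<^esub> y \<otimes>\<^bsub>Q i\<^esub> inv\<^bsub>Q i\<^esub> x \<otimes>\<^bsub>Q i\<^esub> inv\<^bsub>Q i\<^esub> y \<in> D i"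
    if i: "i \<in> I" and x: "x \<in> carrier (Q i)" and y: "y \<in> carrier (Q i)" for i x y
  proof (rule group.gen_comm[OF grpQ Dnormal _ genQ _ x y])
    show "pr i ` a ` {1..n} \<subseteq> carrier (Q i)" using a_in prC by auto
  qed (rule gencomm[OF i])

  have finI: "finite I" unfolding I_def by simp
  have Pcomm: "x \<otimes>\<^bsub>P\<^esub> y \<otimes>\<^bsub>P\<^esub> inv\<^bsub>P\<^esub> x \<otimes>\<^bsub>P\<^esub> inv\<^bsub>P\<^esub> y \<in> H"
    if x: "x \<in> carrier P" and y: "y \<in> carrier P" for x y
  proof -
    define c where "c = (\<lambda>k. x k \<otimes>\<^bsub>Q k\<^esub> y k \<otimes>\<^bsub>Q k\<^esub> inv\<^bsub>Q k\<^esub> x k \<otimes>\<^bsub>Q k\<^esub> inv\<^bsub>Q k\<^esub> y k)"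
    have xE: "x \<in> (\<Pi>\<^sub>E k\<in>I. carrier (Q k))" and yE: "y \<in> (\<Pi>\<^sub>E k\<in>I. carrier (Q k))"
      using x y unfolding P_def by auto
    have cc: "c k \<in> carrier (Q k)" if "k \<in> I" for k
      using xE yE that unfolding c_def
      by (simp add: PiE_iff group.is_monoid[OF grpQ] group.inv_closed[OF grpQ] monoid.m_closed)
    have cD: "e k (c k) \<in> H" if "k \<in> I" for k
      using allcomm[OF that, of "x k" "y k"] xE yE that unfolding c_def D_def by (auto simp: PiE_iff)
    define f where "f = (\<lambda>J. \<lambda>k\<in>I. if k \<in> J then c k else \<one>\<^bsub>Q k\<^esub>)"
    have fP: "f J \<in> carrier P" for J unfolding f_def P_def using cc oneQ by auto
    have "J \<subseteq> I \<Longrightarrow> f J \<in> H" for J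
    proof (induction J rule: infinite_finite_induct)
      case (infinite J) thus ?case using finI finite_subset by blast
    next
      case empty
      have "f {} = \<one>\<^bsub>P\<^esub>" unfolding f_def P_def by simp
      thus ?case using Hone by simp
    next
      case (insert j J)
      have j: "j \<in> I" using insert by auto
      have "f (insert j J) = e j (c j) \<otimes>\<^bsub>P\<^esub> f J"
        unfolding f_def e_def P_def using insert(2) j cc oneQ
        by (simp only: mult_product_group)
           (intro restrict_ext, auto simp: group.is_monoid[OF grpQ])
      thus ?case using subgroup.m_closed[OF Hsub cD[OF j]] insert by simp
    qed
    hence "f I \<in> H" by simp
    moreover have "x \<otimes>\<^bsub>P\<^esub> y \<otimes>\<^bsub>P\<^esub> inv\<^bsub>P\<^esub> x \<otimes>\<^bsub>P\<^esub> inv\<^bsub>P\<^esub> y = f I"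
    proof -
      have ix: "inv\<^bsub>P\<^esub> x = (\<lambda>k\<in>I. inv\<^bsub>Q k\<^esub> x k)"
        unfolding P_def using inv_product_group[OF xE] grpQ by blast
      have iy: "inv\<^bsub>P\<^esub> y = (\<lambda>k\<in>I. inv\<^bsub>Q k\<^esub> y k)"
        unfolding P_def using inv_product_group[OF yE] grpQ by blast
      show ?thesis unfolding ix iy unfolding P_def f_def c_def
        by (simp only: mult_product_group) (intro restrict_ext, simp)
    qed
    ultimately show ?thesis by simp
  qed
  have "comm_group (P Mod H)"
    by (rule group.comm_quot[OF grpP Hsub Pcomm])
  thus ?thesis unfolding P_def H_def \<rho>_def I_def Q_def pr_def .
qed
end
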